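(* Let $e:\mathbb{R}^n\to\mathbb{R}^n$ and $f:\mathbb{R}^n\times\mathbb{R}^m\to\mathbb{R}^n$ be continuously differentiable and consider the implicit model $e(x_{t+1})=f(x_t,u_t)$. Suppose there exists $\epsilon>0$ with $E(x)+E(x)^\top\succ\epsilon I$ for all $x$, that $F(x,u)\ge 0$, $K(x,u)\ge 0$ and $E(x)\in\mathbb{M}^n$ for all $(x,u)$, and that $e(0)=f(0,0)$. Then the model is positive.
   Context: Consider discrete-time implicit models $e(x_{t+1})=f(x_t,u_t)$, $t=0,1,2,\dots$, with state $x_t\in\mathbb{R}^n$ and input $u_t\in\mathbb{R}^m$, where $e$ and $f$ are continuously differentiable. Write $E=\partial e/\partial x$, $F=\partial f/\partial x$, $K=\partial f/\partial u$. The model is well-posed if for every $(x_t,u_t)$ there is a unique $x_{t+1}$ satisfying the model equation. The model is positive if for all inputs with $u_t\ge0$ for all $t$ and all initial conditions $x_0\ge 0$, the resulting trajectory satisfies $x_t\ge0$ for all $t$. Inequalities between vectors/matrices are elementwise; $M\succ0$ means positive definite. $\mathbb{M}^n$ denotes the set of $n\times n$ nonsingular M-matrices: real matrices with all off-diagonal entries $\le 0$ and all eigenvalues having positive real part. *)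

theory Defs
  imports "HOL-Analysis.Analysis"
begin

definition pos_def_mat :: "real^'n^'n \<Rightarrow> bool" where
  "pos_def_mat M \<longleftrightarrow> (\<forall>v. v \<noteq> 0 \<longrightarrow> v \<bullet> (M *v v) > 0)"

definition cmat :: "real^'n^'m \<Rightarrow> complex^'n^'m" where
  "cmat M = (\<chi> i j. complex_of_real (M $ i $ j))"

definition nonsing_M_matrix :: "real^'n^'n \<Rightarrow> bool" where
  "nonsing_M_matrix M \<longleftrightarrow>
     (\<forall>i j. i \<noteq> j \<longrightarrow> M $ i $ j \<le> 0) \<and>
     (\<forall>(lam::complex) (v::complex^'n). v \<noteq> 0 \<and> cmat M *v v = lam *s v \<longrightarrow> Re lam > 0)"

definition positive_model ::
  "(real^'n \<Rightarrow> real^'n) \<Rightarrow> (real^'n \<Rightarrow> real^'m \<Rightarrow> real^'n) \<Rightarrow> bool" where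
  "positive_model e f \<longleftrightarrow>
     (\<forall>(x::nat \<Rightarrow> real^'n) (u::nat \<Rightarrow> real^'m).
        (\<forall>t. u t \<ge> 0) \<longrightarrow> x 0 \<ge> 0 \<longrightarrow>
        (\<forall>t. e (x (Suc t)) = f (x t) (u t)) \<longrightarrow> (\<forall>t. x t \<ge> 0))"

end

theory Submission
  imports Defs
begin

lemma line_deriv:
  fixes G :: "'a::real_normed_vector \<Rightarrow> 'b::real_normed_vector"
  assumes G: "(G has_derivative G') (at (a + t *\<^sub>R d))" and l: "bounded_linear l"
  shows "((\<lambda>s. l (G (a + s *\<^sub>R d))) has_real_derivative l (G' d)) (at t)"
proof -
  have lin: "bounded_linear G'" using G by (rule has_derivative_bounded_linear)
  have p: "((\<lambda>s. a + s *\<^sub>R d) has_derivative (\<lambda>h. h *\<^sub>R d)) (at t)"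
    by (auto intro!: derivative_eq_intros)
  have "((\<lambda>s. G (a + s *\<^sub>R d)) has_derivative (\<lambda>h. G' (h *\<^sub>R d))) (at t)"
    using has_derivative_compose[OF p G] .
  from bounded_linear.has_derivative[OF l this]
  have "((\<lambda>s. l (G (a + s *\<^sub>R d))) has_derivative (\<lambda>h. l (G' (h *\<^sub>R d)))) (at t)" .
  moreover have "(\<lambda>h. l (G' (h *\<^sub>R d))) = (\<lambda>h. l (G' d) * h)"
    using lin l by (auto simp: linear_simps bounded_linear.linear)
  ultimately show ?thesis by (simp add: has_field_derivative_def)
qed

lemma offdiag_anti:
  fixes e :: "real^'n \<Rightarrow> real^'n" and E :: "real^'n \<Rightarrow> real^'n^'n"
  assumes e_deriv: "\<And>x. (e has_derivative (\<lambda>h. E x *v h)) (at x)"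
    and off: "\<And>x i j. i \<noteq> j \<Longrightarrow> E x $ i $ j \<le> 0"
    and ab: "a \<le> b" and eq: "a $ i = b $ i"
  shows "e b $ i \<le> e a $ i"
proof -
  define d where "d = b - a"
  have dnn: "\<And>j. d $ j \<ge> 0" using ab by (simp add: d_def less_eq_vec_def)
  have di: "d $ i = 0" using eq by (simp add: d_def)
  have "(\<lambda>s. - (e (a + s *\<^sub>R d) $ i)) 0 \<le> (\<lambda>s. - (e (a + s *\<^sub>R d) $ i)) 1"
  proof (rule DERIV_nonneg_imp_nondecreasing[where f="\<lambda>s. - (e (a + s *\<^sub>R d) $ i)"])
    fix t :: real assume "0 \<le> t" "t \<le> 1"
    have lin: "bounded_linear (\<lambda>v::real^'n. - (v $ i))"
      by (rule bounded_linear_minus[OF bounded_linear_vec_nth])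
    have D: "((\<lambda>s. - (e (a + s *\<^sub>R d) $ i)) has_real_derivative - ((E (a + t *\<^sub>R d) *v d) $ i)) (at t)"
      using line_deriv[OF e_deriv lin] by simp
    have "(E (a + t *\<^sub>R d) *v d) $ i \<le> 0"
      unfolding matrix_vector_mult_def
    proof (simp, rule sum_nonpos)
      fix j show "E (a + t *\<^sub>R d) $ i $ j * d $ j \<le> 0"
        using off[of i j] dnn[of j] di by (cases "i = j") (auto intro: mult_nonpos_nonneg)
    qed
    then show "\<exists>y. ((\<lambda>s. - (e (a + s *\<^sub>R d) $ i)) has_real_derivative y) (at t) \<and> 0 \<le> y"
      using D by force
  qed simp
  then show ?thesis by (simp add: d_def)
qed

lemma strict_mono_e:
  fixes e :: "real^'n \<Rightarrow> real^'n" and E :: "real^'n \<Rightarrow> real^'n^'n"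
  assumes e_deriv: "\<And>x. (e has_derivative (\<lambda>h. E x *v h)) (at x)"
    and eps_pos: "\<epsilon> > 0"
    and E_pd: "\<And>x. pos_def_mat (E x + transpose (E x) - \<epsilon> *\<^sub>R mat 1)"
    and ne: "v \<noteq> q"
  shows "(e v - e q) \<bullet> (v - q) > 0"
proof -
  define d where "d = v - q"
  have d0: "d \<noteq> 0" using ne by (simp add: d_def)
  have "(\<lambda>s. e (q + s *\<^sub>R d) \<bullet> d) 0 < (\<lambda>s. e (q + s *\<^sub>R d) \<bullet> d) 1"
  proof (rule DERIV_pos_imp_increasing[where f="\<lambda>s. e (q + s *\<^sub>R d) \<bullet> d"])
    fix t :: real assume "0 \<le> t" "t \<le> 1"
    have D: "((\<lambda>s. e (q + s *\<^sub>R d) \<bullet> d) has_real_derivative (E (q + t *\<^sub>R d) *v d) \<bullet> d) (at t)"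
      using line_deriv[OF e_deriv bounded_linear_inner_left] by simp
    let ?E = "E (q + t *\<^sub>R d)"
    have pd: "d \<bullet> ((?E + transpose ?E - \<epsilon> *\<^sub>R mat 1) *v d) > 0"
      using E_pd d0 unfolding pos_def_mat_def by blast
    have dl: "d \<bullet> (d v* ?E) = d \<bullet> (?E *v d)" by (metis dot_lmul_matrix inner_commute)
    have "d \<bullet> ((?E + transpose ?E - \<epsilon> *\<^sub>R mat 1) *v d) = 2 * ((?E *v d) \<bullet> d) - \<epsilon> * (d \<bullet> d)"
      by (simp add: matrix_vector_mult_add_rdistrib matrix_vector_mult_diff_rdistrib
          transpose_matrix_vector inner_add_right inner_diff_right dot_lmul_matrix
          inner_commute dl scaleR_matrix_vector_assoc[symmetric])
    moreover have "d \<bullet> d \<ge> 0" by simp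
    ultimately have "(?E *v d) \<bullet> d > 0" using pd eps_pos
      by (smt (verit) mult_nonneg_nonneg)
    then show "\<exists>y. ((\<lambda>s. e (q + s *\<^sub>R d) \<bullet> d) has_real_derivative y) (at t) \<and> 0 < y"
      using D by blast
  qed simp
  then show ?thesis by (simp add: d_def inner_diff_left)
qed


lemma f_mono:
  fixes f :: "real^'n \<Rightarrow> real^'m \<Rightarrow> real^'n"
    and F :: "real^'n \<Rightarrow> real^'m \<Rightarrow> real^'n^'n"
    and K :: "real^'n \<Rightarrow> real^'m \<Rightarrow> real^'m^'n"
  assumes f_deriv: "\<And>x u. ((\<lambda>(y, w). f y w) has_derivative
                     (\<lambda>(h, k). F x u *v h + K x u *v k)) (at (x, u))"
    and F_nonneg: "\<And>x u. F x u \<ge> 0"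
    and K_nonneg: "\<And>x u. K x u \<ge> 0"
    and x0: "x \<ge> 0" and u0: "u \<ge> 0"
  shows "f 0 0 \<le> f x u"
proof -
  have "f 0 0 $ i \<le> f x u $ i" for i
  proof -
    let ?G = "\<lambda>(y, w). f y w"
    let ?g = "\<lambda>s. ?G ((0::real^'n, 0::real^'m) + s *\<^sub>R (x, u)) $ i"
    have "?g 0 \<le> ?g 1"
    proof (rule DERIV_nonneg_imp_nondecreasing[where f="?g"])
      fix t :: real assume "0 \<le> t" "t \<le> 1"
      let ?p = "(0::real^'n, 0::real^'m) + t *\<^sub>R (x, u)"
      have D: "(?g has_real_derivative (F (fst ?p) (snd ?p) *v x + K (fst ?p) (snd ?p) *v u) $ i) (at t)"
        using line_deriv[OF f_deriv[of "fst ?p" "snd ?p", simplified prod.collapse] bounded_linear_vec_nth[of i]]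
        by simp
      have nn: "0 \<le> (M *v v) $ i" if "M \<ge> 0" "v \<ge> 0" for M :: "real^'k^'n" and v :: "real^'k"
        unfolding matrix_vector_mult_def using that
        by (auto simp: less_eq_vec_def intro!: sum_nonneg mult_nonneg_nonneg)
      have "0 \<le> (F (fst ?p) (snd ?p) *v x + K (fst ?p) (snd ?p) *v u) $ i"
        using nn[OF F_nonneg x0] nn[OF K_nonneg u0] by simp
      then show "\<exists>y. (?g has_real_derivative y) (at t) \<and> 0 \<le> y" using D by blast
    qed simp
    then show ?thesis by simp
  qed
  then show ?thesis by (simp add: less_eq_vec_def)
qed

lemma e_inv_mono:
  fixes e :: "real^'n \<Rightarrow> real^'n" and E :: "real^'n \<Rightarrow> real^'n^'n"
  assumes e_deriv: "\<And>x. (e has_derivative (\<lambda>h. E x *v h)) (at x)"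
    and off: "\<And>x i j. i \<noteq> j \<Longrightarrow> E x $ i $ j \<le> 0"
    and eps_pos: "\<epsilon> > 0"
    and E_pd: "\<And>x. pos_def_mat (E x + transpose (E x) - \<epsilon> *\<^sub>R mat 1)"
    and le: "e q \<le> e p"
  shows "q \<le> p"
proof -
  define v where "v = (\<chi> i. min (p $ i) (q $ i))"
  have vp: "v \<le> p" by (simp add: v_def less_eq_vec_def)
  have "v = q"
  proof (rule ccontr)
    assume "v \<noteq> q"
    then have pos: "(e v - e q) \<bullet> (v - q) > 0"
      using strict_mono_e[OF e_deriv eps_pos E_pd] by blast
    have "(e v - e q) \<bullet> (v - q) = (\<Sum>i\<in>UNIV. (e v - e q) $ i * (v - q) $ i)"
      by (simp add: inner_vec_def)
    also have "\<dots> \<le> 0"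
    proof (rule sum_nonpos)
      fix i
      show "(e v - e q) $ i * (v - q) $ i \<le> 0"
      proof (cases "p $ i < q $ i")
        case True
        then have vi: "v $ i = p $ i" by (simp add: v_def)
        have "e p $ i \<le> e v $ i" using offdiag_anti[OF e_deriv off vp vi] .
        moreover have "e q $ i \<le> e p $ i" using le by (simp add: less_eq_vec_def)
        ultimately show ?thesis using True vi
          by (simp add: mult_nonneg_nonpos)
      next
        case False
        then show ?thesis by (simp add: v_def)
      qed
    qed
    finally show False using pos by simp
  qed
  then show ?thesis using vp by simp
qed

theorem theorem1:
  fixes e :: "real^'n \<Rightarrow> real^'n"
    and f :: "real^'n \<Rightarrow> real^'m \<Rightarrow> real^'n"
    and E :: "real^'n \<Rightarrow> real^'n^'n"
    and F :: "real^'n \<Rightarrow> real^'m \<Rightarrow> real^'n^'n"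
    and K :: "real^'n \<Rightarrow> real^'m \<Rightarrow> real^'m^'n"
    and \<epsilon> :: real
  assumes e_deriv: "\<And>x. (e has_derivative (\<lambda>h. E x *v h)) (at x)"
    and E_cont: "continuous_on UNIV E"
    and f_deriv: "\<And>x u. ((\<lambda>(y, w). f y w) has_derivative
                     (\<lambda>(h, k). F x u *v h + K x u *v k)) (at (x, u))"
    and F_cont: "continuous_on UNIV (\<lambda>(x, u). F x u)"
    and K_cont: "continuous_on UNIV (\<lambda>(x, u). K x u)"
    and eps_pos: "\<epsilon> > 0"
    and E_pd: "\<And>x. pos_def_mat (E x + transpose (E x) - \<epsilon> *\<^sub>R mat 1)"
    and F_nonneg: "\<And>x u. F x u \<ge> 0"
    and K_nonneg: "\<And>x u. K x u \<ge> 0"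
    and E_M: "\<And>x. nonsing_M_matrix (E x)"
    and e0: "e 0 = f 0 0"
  shows "positive_model e f"
proof -
  have off: "\<And>x i j. i \<noteq> j \<Longrightarrow> E x $ i $ j \<le> 0"
    using E_M unfolding nonsing_M_matrix_def by blast
  show ?thesis unfolding positive_model_def
  proof (intro allI impI)
    fix x :: "nat \<Rightarrow> real^'n" and u :: "nat \<Rightarrow> real^'m" and t
    assume u0: "\<forall>t. u t \<ge> 0" and x0: "x 0 \<ge> 0" and eq: "\<forall>t. e (x (Suc t)) = f (x t) (u t)"
    show "x t \<ge> 0"
    proof (induction t)
      case 0 then show ?case using x0 .
    next
      case (Suc t)
      have "e 0 \<le> e (x (Suc t))"
        using f_mono[OF f_deriv F_nonneg K_nonneg Suc u0[rule_format, of t]] eq e0 by simp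
      then show ?case using e_inv_mono[OF e_deriv off eps_pos E_pd] by blast
    qed
  qed
qed

end
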